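(* Let $(T_1,T_2,T_3,T_4)$ be an ordered binary forest on $\{1,\dots,m\}$, let $x_i=|L(T_i)|$ for $i=1,2,3,4$, and assume $x_1\ge x_2$, $x_3\ge x_4$ and $x_1>x_3$. Let $T_0$ be the binary phylogenetic tree with root $z$ having children $a$ and $b$, where $a$ has children the roots of $T_1$ and $T_2$, and $b$ has children the roots of $T_3$ and $T_4$. Let $n\ge m$ and let $T$ be a binary phylogenetic tree with $n$ leaves having $T_0$ as the subtree rooted at some node. If $\Phi(T)$ is minimum among all binary phylogenetic trees with $n$ leaves, then $x_4\ge x_2$.
   Context: A phylogenetic tree on a finite set $S$ is a rooted tree whose leaves are bijectively labeled by $S$, every internal node having at least two children; binary means exactly two children; a tree with $n$ leaves is one on $\{1,\dots,n\}$. $L(T)$ is the leaf set. An ordered binary $k$-forest on $S$ is a sequence of $k$ binary phylogenetic trees on pairwise disjoint sets with union $S$. The subtree rooted at a node $v$ is the subgraph induced on the descendants of $v$. The depth $\delta_T(v)$ is the number of arcs from the root to $v$; for leaves $i\ne j$, $\varphi_T(i,j)=\delta_T(LCA_T(i,j))$ ($LCA$ = lowest common ancestor), and $\Phi(T)$ is the sum of $\varphi_T(i,j)$ over all unordered pairs of distinct leaves. *)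

theory Defs
  imports Main
begin

text \<open>Binary phylogenetic trees: a leaf carries a label, an internal node has exactly
two children. The order of children is immaterial for all notions below.\<close>
datatype btree = Leaf nat | Node btree btree

fun leaves_list :: "btree \<Rightarrow> nat list" where
  "leaves_list (Leaf a) = [a]"
| "leaves_list (Node l r) = leaves_list l @ leaves_list r"

definition L :: "btree \<Rightarrow> nat set" where
  "L t = set (leaves_list t)"

definition binary_phylo_on :: "btree \<Rightarrow> nat set \<Rightarrow> bool" where
  "binary_phylo_on t S \<longleftrightarrow> distinct (leaves_list t) \<and> set (leaves_list t) = S"

fun subtrees :: "btree \<Rightarrow> btree set" where
  "subtrees (Leaf a) = {Leaf a}"
| "subtrees (Node l r) = insert (Node l r) (subtrees l \<union> subtrees r)"

fun lca_depth :: "btree \<Rightarrow> nat \<Rightarrow> nat \<Rightarrow> nat" where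
  "lca_depth (Leaf a) i j = 0"
| "lca_depth (Node l r) i j =
     (if i \<in> L l \<and> j \<in> L l then 1 + lca_depth l i j
      else if i \<in> L r \<and> j \<in> L r then 1 + lca_depth r i j
      else 0)"

definition Phi :: "btree \<Rightarrow> nat" where
  "Phi t = (\<Sum>(i,j)\<in>{(i,j). i \<in> L t \<and> j \<in> L t \<and> i < j}. lca_depth t i j)"

definition ordered_binary_4forest_on ::
  "btree \<Rightarrow> btree \<Rightarrow> btree \<Rightarrow> btree \<Rightarrow> nat set \<Rightarrow> bool" where
  "ordered_binary_4forest_on t1 t2 t3 t4 S \<longleftrightarrow>
     (let ts = [t1, t2, t3, t4] in
       (\<forall>t\<in>set ts. distinct (leaves_list t)) \<and>
       (\<forall>a<4. \<forall>b<4. a \<noteq> b \<longrightarrow> L (ts ! a) \<inter> L (ts ! b) = {}) \<and>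
       L t1 \<union> L t2 \<union> L t3 \<union> L t4 = S)"

definition Phi_minimum :: "nat \<Rightarrow> btree \<Rightarrow> bool" where
  "Phi_minimum n t \<longleftrightarrow> binary_phylo_on t {1..n} \<and>
     (\<forall>t'. binary_phylo_on t' {1..n} \<longrightarrow> Phi t \<le> Phi t')"

end

theory Submission
  imports Defs "HOL-Library.Multiset"
begin

fun cc :: "nat \<Rightarrow> nat" where
  "cc 0 = 0"
| "cc (Suc k) = cc k + k"

lemma cc2: "2 * cc k = k * (k - 1)"
proof (induction k)
  case (Suc k)
  then show ?case by (cases k) (auto simp: algebra_simps)
qed simp

lemma pairs_card:
  fixes A :: "nat set"
  assumes "finite A"
  shows "card {(i,j). i \<in> A \<and> j \<in> A \<and> i < j} = cc (card A)"
  using assms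
proof (induct A rule: finite_linorder_max_induct)
  case empty
  then show ?case by simp
next
  case (insert b A)
  have eq: "{(i,j). i \<in> insert b A \<and> j \<in> insert b A \<and> i < j}
     = {(i,j). i \<in> A \<and> j \<in> A \<and> i < j} \<union> (\<lambda>i. (i,b)) ` A"
    using insert by auto
  have fin: "finite {(i,j). i \<in> A \<and> j \<in> A \<and> i < j}"
    by (rule finite_subset[of _ "A \<times> A"]) (use insert in auto)
  have disj: "{(i,j). i \<in> A \<and> j \<in> A \<and> i < j} \<inter> (\<lambda>i. (i,b)) ` A = {}"
    using insert by auto
  have ci: "card ((\<lambda>i. (i,b)) ` A) = card A"
    by (rule card_image) (auto simp: inj_on_def)
  have "b \<notin> A" using insert by auto
  then show ?case
    unfolding eq using insert fin disj ci
    by (subst card_Un_disjoint) auto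
qed

fun Psi :: "btree \<Rightarrow> nat" where
  "Psi (Leaf a) = 0"
| "Psi (Node l r) = Psi l + Psi r + cc (length (leaves_list l)) + cc (length (leaves_list r))"

lemma L_Node[simp]: "L (Node l r) = L l \<union> L r"
  by (simp add: L_def)

lemma finite_L[simp]: "finite (L t)" by (simp add: L_def)

lemma Phi_Psi: "distinct (leaves_list t) \<Longrightarrow> Phi t = Psi t"
proof (induction t)
  case (Leaf a)
  then show ?case by (simp add: Phi_def L_def)
next
  case (Node l r)
  have dl: "distinct (leaves_list l)" and dr: "distinct (leaves_list r)"
    and disj: "L l \<inter> L r = {}"
    using Node.prems by (auto simp: L_def)
  define P where "P = {(i,j). i \<in> L (Node l r) \<and> j \<in> L (Node l r) \<and> i < j}"
  define Pl where "Pl = {(i,j). i \<in> L l \<and> j \<in> L l \<and> i < j}"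
  define Pr where "Pr = {(i,j). i \<in> L r \<and> j \<in> L r \<and> i < j}"
  have finP: "finite P"
    by (rule finite_subset[of _ "L (Node l r) \<times> L (Node l r)"]) (auto simp: P_def)
  have sub1: "P \<inter> Pl = Pl" and sub2: "P \<inter> Pr = Pr"
    by (auto simp: P_def Pl_def Pr_def)
  have pt: "\<And>x. x \<in> P \<Longrightarrow> (case x of (i,j) \<Rightarrow> lca_depth (Node l r) i j) =
      (if x \<in> Pl then 1 + (case x of (i,j) \<Rightarrow> lca_depth l i j) else 0) +
      (if x \<in> Pr then 1 + (case x of (i,j) \<Rightarrow> lca_depth r i j) else 0)"
    using disj by (auto simp: P_def Pl_def Pr_def)
  have "Phi (Node l r) = (\<Sum>x\<in>P. case x of (i,j) \<Rightarrow> lca_depth (Node l r) i j)"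
    by (simp add: Phi_def P_def)
  also have "\<dots> = (\<Sum>x\<in>P. (if x \<in> Pl then 1 + (case x of (i,j) \<Rightarrow> lca_depth l i j) else 0)) +
      (\<Sum>x\<in>P. (if x \<in> Pr then 1 + (case x of (i,j) \<Rightarrow> lca_depth r i j) else 0))"
    by (subst sum.distrib[symmetric]) (rule sum.cong[OF refl pt])
  also have "\<dots> = (\<Sum>x\<in>Pl. 1 + (case x of (i,j) \<Rightarrow> lca_depth l i j)) +
      (\<Sum>x\<in>Pr. 1 + (case x of (i,j) \<Rightarrow> lca_depth r i j))"
    using finP by (simp add: sum.If_cases sub1 sub2)
  also have "\<dots> = card Pl + Phi l + (card Pr + Phi r)"
    by (simp only: sum.distrib card_eq_sum) (simp add: Phi_def Pl_def Pr_def)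
  also have "card Pl = cc (length (leaves_list l))"
    unfolding Pl_def using dl by (simp add: pairs_card L_def distinct_card)
  also have "card Pr = cc (length (leaves_list r))"
    unfolding Pr_def using dr by (simp add: pairs_card L_def distinct_card)
  finally show ?case using Node.IH dl dr by simp
qed

lemma replace:
  "S \<in> subtrees T \<Longrightarrow> mset (leaves_list S') = mset (leaves_list S) \<Longrightarrow>
   \<exists>T'. mset (leaves_list T') = mset (leaves_list T) \<and> Psi T' + Psi S = Psi T + Psi S'"
proof (induction T)
  case (Leaf a)
  then show ?case by (intro exI[of _ S']) auto
next
  case (Node l r)
  show ?case
  proof (cases "S = Node l r")
    case True
    then show ?thesis using Node.prems by (intro exI[of _ S']) auto
  next
    case False
    then have "S \<in> subtrees l \<or> S \<in> subtrees r" using Node.prems by auto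
    then show ?thesis
    proof
      assume "S \<in> subtrees l"
      from Node.IH(1)[OF this Node.prems(2)] obtain l' where
        h: "mset (leaves_list l') = mset (leaves_list l)" "Psi l' + Psi S = Psi l + Psi S'" by blast
      have "length (leaves_list l') = length (leaves_list l)"
        using h(1) by (metis size_mset)
      then show ?thesis using h by (intro exI[of _ "Node l' r"]) auto
    next
      assume "S \<in> subtrees r"
      from Node.IH(2)[OF this Node.prems(2)] obtain r' where
        h: "mset (leaves_list r') = mset (leaves_list r)" "Psi r' + Psi S = Psi r + Psi S'" by blast
      have "length (leaves_list r') = length (leaves_list r)"
        using h(1) by (metis size_mset)
      then show ?thesis using h by (intro exI[of _ "Node l r'"]) auto
    qed
  qed
qed

lemma arith_key:
  fixes a b d e :: nat
  assumes "a > b" "d > e"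
  shows "cc (a+e) + cc (b+d) < cc (a+d) + cc (b+e)"
proof -
  have "2 * (cc (a+e) + cc (b+d)) < 2 * (cc (a+d) + cc (b+e))"
  proof -
    have h: "int (2 * (cc (a+e) + cc (b+d))) < int (2 * (cc (a+d) + cc (b+e)))"
    proof -
      have e1: "int (2 * (cc (a+e) + cc (b+d))) = int (a+e) * (int (a+e) - 1) + int (b+d) * (int (b+d) - 1)"
        by (simp only: distrib_left cc2) (cases "a+e"; cases "b+d"; simp add: algebra_simps)
      have e2: "int (2 * (cc (a+d) + cc (b+e))) = int (a+d) * (int (a+d) - 1) + int (b+e) * (int (b+e) - 1)"
        by (simp only: distrib_left cc2) (cases "a+d"; cases "b+e"; simp add: algebra_simps)
      have "(int a - int b) * (int d - int e) > 0" using assms by simp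
      then show ?thesis unfolding e1 e2 by (simp add: algebra_simps)
    qed
    then show ?thesis by linarith
  qed
  then show ?thesis by simp
qed

theorem mainTheorem8:
  fixes T1 T2 T3 T4 T :: btree and m n :: nat
  assumes "ordered_binary_4forest_on T1 T2 T3 T4 {1..m}"
    and "card (L T1) \<ge> card (L T2)"
    and "card (L T3) \<ge> card (L T4)"
    and "card (L T1) > card (L T3)"
    and "n \<ge> m"
    and "binary_phylo_on T {1..n}"
    and "Node (Node T1 T2) (Node T3 T4) \<in> subtrees T"
    and "Phi_minimum n T"
  shows "card (L T4) \<ge> card (L T2)"
proof (rule ccontr)
  assume neg: "\<not> ?thesis"
  have d: "distinct (leaves_list T1)" "distinct (leaves_list T2)"
     "distinct (leaves_list T3)" "distinct (leaves_list T4)"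
    using assms(1) by (auto simp: ordered_binary_4forest_on_def Let_def)
  have cl: "card (L Ti) = length (leaves_list Ti)" if "distinct (leaves_list Ti)" for Ti
    using that by (simp add: L_def distinct_card)
  define S where "S = Node (Node T1 T2) (Node T3 T4)"
  define S' where "S' = Node (Node T1 T4) (Node T3 T2)"
  have ms: "mset (leaves_list S') = mset (leaves_list S)"
    by (simp add: S_def S'_def)
  obtain T' where T': "mset (leaves_list T') = mset (leaves_list T)" "Psi T' + Psi S = Psi T + Psi S'"
    using replace[OF assms(7)[folded S_def] ms] by blast
  have dT: "distinct (leaves_list T)" and sT: "set (leaves_list T) = {1..n}"
    using assms(6) by (auto simp: binary_phylo_on_def)
  have dT': "distinct (leaves_list T')" using T'(1) dT mset_eq_imp_distinct_iff by blast
  have sT': "set (leaves_list T') = {1..n}" using T'(1) sT by (metis set_mset_mset)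
  have "Phi T \<le> Phi T'" using assms(8) dT' sT' by (auto simp: Phi_minimum_def binary_phylo_on_def)
  hence le: "Psi T \<le> Psi T'" using Phi_Psi dT dT' by simp
  have "cc (length (leaves_list T1) + length (leaves_list T4)) + cc (length (leaves_list T3) + length (leaves_list T2))
     < cc (length (leaves_list T1) + length (leaves_list T2)) + cc (length (leaves_list T3) + length (leaves_list T4))"
    apply (rule arith_key)
    using assms(4) neg cl[OF d(1)] cl[OF d(2)] cl[OF d(3)] cl[OF d(4)] by auto
  hence "Psi S' < Psi S" by (simp add: S_def S'_def)
  with T'(2) le show False by linarith
qed

end
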